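(* Let $k\ge2$, $n\ge1$, and let $T$ be a $k$-tensor in $n$ dimensions with all entries positive that is $2$-line stochastic. Then $T$ has a unique positive fixed point, i.e., there is exactly one entrywise positive probability vector $p\in\mathbb R^n$ with $T(p,\dots,p)=p$.
   Context: A $k$-tensor in $n$ dimensions is an array $T=(T_{i,j_1,\dots,j_{k-1}})$ with all indices in $[n]$; the first index is the output index. It acts on probability vectors by $T(p_1,\dots,p_{k-1})_i=\sum_{j_1,\dots,j_{k-1}=1}^n T_{i,j_1,\dots,j_{k-1}}\,p_1(j_1)\cdots p_{k-1}(j_{k-1})$. $T$ is $2$-line stochastic if it is stochastic over the output index, i.e., $\sum_{i=1}^nT_{i,j_1,\dots,j_{k-1}}=1$ for all fixed $j_1,\dots,j_{k-1}$, and there is an input position $m\in\{1,\dots,k-1\}$ over which it is also stochastic, i.e., $\sum_{j_m=1}^nT_{i,j_1,\dots,j_{k-1}}=1$ for every fixing of $i$ and of the other input indices. A fixed point of $T$ is a probability vector $p$ (nonnegative entries summing to $1$) with $p=T(p,\dots,p)$. *)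

theory Defs
  imports Complex_Main
begin

text \<open>A k-tensor in n dimensions is represented as T :: nat \<Rightarrow> nat list \<Rightarrow> real,
  where T i js is the entry with output index i \<in> {0..<n} and input indices
  js = [j_1,...,j_(k-1)] (a list of length k-1 with entries in {0..<n}).
  Indices are 0-based. Values outside this range are irrelevant.\<close>

definition input_indices :: "nat \<Rightarrow> nat \<Rightarrow> nat list set" where
  "input_indices k n = {js. length js = k - 1 \<and> set js \<subseteq> {..<n}}"

definition tensor_apply_diag :: "nat \<Rightarrow> nat \<Rightarrow> (nat \<Rightarrow> nat list \<Rightarrow> real) \<Rightarrow> (nat \<Rightarrow> real) \<Rightarrow> nat \<Rightarrow> real" where
  "tensor_apply_diag k n T p i =
     (\<Sum>js\<in>input_indices k n. T i js * (\<Prod>l<k - 1. p (js ! l)))"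

definition positive_tensor :: "nat \<Rightarrow> nat \<Rightarrow> (nat \<Rightarrow> nat list \<Rightarrow> real) \<Rightarrow> bool" where
  "positive_tensor k n T \<longleftrightarrow> (\<forall>i<n. \<forall>js\<in>input_indices k n. T i js > 0)"

definition two_line_stochastic :: "nat \<Rightarrow> nat \<Rightarrow> (nat \<Rightarrow> nat list \<Rightarrow> real) \<Rightarrow> bool" where
  "two_line_stochastic k n T \<longleftrightarrow>
     (\<forall>js\<in>input_indices k n. (\<Sum>i<n. T i js) = 1) \<and>
     (\<exists>m<k - 1. \<forall>i<n. \<forall>js\<in>input_indices k n. (\<Sum>j<n. T i (js[m := j])) = 1)"

definition prob_vector :: "nat \<Rightarrow> (nat \<Rightarrow> real) \<Rightarrow> bool" where
  "prob_vector n p \<longleftrightarrow> (\<forall>i<n. p i \<ge> 0) \<and> (\<forall>i\<ge>n. p i = 0) \<and> (\<Sum>i<n. p i) = 1"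

definition is_fixed_point :: "nat \<Rightarrow> nat \<Rightarrow> (nat \<Rightarrow> nat list \<Rightarrow> real) \<Rightarrow> (nat \<Rightarrow> real) \<Rightarrow> bool" where
  "is_fixed_point k n T p \<longleftrightarrow> prob_vector n p \<and> (\<forall>i<n. tensor_apply_diag k n T p i = p i)"

end

theory Submission
  imports Defs
begin

lemma reindex_sum:
  fixes F :: "nat list \<Rightarrow> real"
  assumes "m < L" "0 < n"
  shows "(\<Sum>js\<in>{js. length js = L \<and> set js \<subseteq> {..<n}}. F js)
       = (\<Sum>r\<in>{r. length r = L \<and> set r \<subseteq> {..<n} \<and> r!m = 0}. \<Sum>j<n. F (r[m:=j]))"
proof -
  let ?R = "{r. length r = L \<and> set r \<subseteq> {..<n} \<and> r!m = 0}"
  let ?I = "{js. length js = L \<and> set js \<subseteq> {..<n}}"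
  have bij: "bij_betw (\<lambda>(r,j). r[m:=j]) (?R \<times> {..<n}) ?I"
  proof (rule bij_betw_byWitness[where f'="\<lambda>js. (js[m:=0], js!m)"])
    show "\<forall>a\<in>?R \<times> {..<n}. (\<lambda>js. (js[m:=0], js!m)) ((\<lambda>(r,j). r[m:=j]) a) = a"
      using assms by (auto, metis list_update_id)
    show "\<forall>a'\<in>?I. (\<lambda>(r,j). r[m:=j]) ((\<lambda>js. (js[m:=0], js!m)) a') = a'"
      by auto
    show "(\<lambda>(r,j). r[m:=j]) ` (?R \<times> {..<n}) \<subseteq> ?I"
    proof (rule image_subsetI)
      fix x assume "x \<in> ?R \<times> {..<n}"
      then obtain r j where x: "x = (r,j)" "r \<in> ?R" "j < n" by auto
      then show "(\<lambda>(r,j). r[m:=j]) x \<in> ?I" using set_update_subset_insert[of r m j] by auto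
    qed
    show "(\<lambda>js. (js[m:=0], js!m)) ` ?I \<subseteq> ?R \<times> {..<n}"
    proof (rule image_subsetI)
      fix js assume js: "js \<in> ?I"
      then have "m < length js" using assms by simp
      then have "js!m \<in> set js" by (rule nth_mem)
      then have "js!m < n" using js by blast
      then show "(js[m:=0], js!m) \<in> ?R \<times> {..<n}" using js assms set_update_subset_insert[of js m 0] by auto
    qed
  qed
  have "(\<Sum>r\<in>?R. \<Sum>j<n. F (r[m:=j])) = (\<Sum>x\<in>?R \<times> {..<n}. F ((\<lambda>(r,j). r[m:=j]) x))"
    by (simp add: sum.cartesian_product split_def)
  also have "\<dots> = (\<Sum>js\<in>?I. F js)"
    by (rule sum.reindex_bij_betw[OF bij])
  finally show ?thesis by simp
qed


theorem theorem1p6: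
  fixes k n :: nat and T :: "nat \<Rightarrow> nat list \<Rightarrow> real"
  assumes "k \<ge> 2" and "n \<ge> 1"
    and "positive_tensor k n T"
    and "two_line_stochastic k n T"
  shows "\<exists>!p. is_fixed_point k n T p \<and> (\<forall>i<n. p i > 0)"
proof -
  define L where "L = k - 1"
  define I where "I = input_indices k n"
  have I_def': "I = {js. length js = L \<and> set js \<subseteq> {..<n}}"
    unfolding I_def input_indices_def L_def by auto
  obtain m where m: "m < L"
    and rowst: "\<And>i js. i < n \<Longrightarrow> js \<in> I \<Longrightarrow> (\<Sum>j<n. T i (js[m := j])) = 1"
    using assms(4) unfolding two_line_stochastic_def I_def L_def by blast
  have colst: "\<And>js. js \<in> I \<Longrightarrow> (\<Sum>i<n. T i js) = 1"
    using assms(4) unfolding two_line_stochastic_def I_def by blast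
  have Tpos: "\<And>i js. i < n \<Longrightarrow> js \<in> I \<Longrightarrow> T i js > 0"
    using assms(3) unfolding positive_tensor_def I_def by blast
  have n0: "0 < n" using assms(2) by simp
  define R where "R = {r. length r = L \<and> set r \<subseteq> {..<n} \<and> r!m = 0}"
  have RI: "R \<subseteq> I" unfolding R_def I_def' by auto
  have re: "\<And>F::nat list \<Rightarrow> real. (\<Sum>js\<in>I. F js) = (\<Sum>r\<in>R. \<Sum>j<n. F (r[m:=j]))"
    unfolding I_def' R_def by (rule reindex_sum[OF m n0])
  have I2: "I = {xs. set xs \<subseteq> {..<n} \<and> length xs = L}" unfolding I_def' by auto
  have finI: "finite I" unfolding I2 by (simp add: finite_lists_length_eq)
  have finR: "finite R" using finite_subset[OF RI finI] .
  have cardI: "card I = n ^ L" unfolding I2 using card_lists_length_eq[of "{..<n}" L] by simp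
  have "real (card I) = real (card R) * real n" using re[of "\<lambda>_. 1"] by simp
  then have cardR: "card I = card R * n" by (metis of_nat_eq_iff of_nat_mult)
  have updI: "\<And>r j. r \<in> R \<Longrightarrow> j < n \<Longrightarrow> r[m:=j] \<in> I"
  proof -
    fix r j assume "r \<in> R" "j < n"
    then show "r[m:=j] \<in> I" unfolding R_def I_def' using set_update_subset_insert[of r m j] by auto
  qed
  have rlen: "\<And>r. r \<in> R \<Longrightarrow> length r = L" unfolding R_def by auto
  define u where "u = (\<lambda>i. if i < n then 1 / real n else 0)"
  have ufix: "is_fixed_point k n T u"
  proof -
    have pv: "prob_vector n u" unfolding prob_vector_def u_def using n0 by auto
    have "tensor_apply_diag k n T u i = u i" if i: "i < n" for i
    proof -
      have pr: "(\<Prod>l<L. u (js ! l)) = (1 / real n) ^ L" if "js \<in> I" for js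
      proof -
        have js: "length js = L" "set js \<subseteq> {..<n}" using that unfolding I_def' by auto
        have "u (js!l) = 1 / real n" if "l \<in> {..<L}" for l
        proof -
          have "js!l \<in> set js" using that js by (intro nth_mem) auto
          then have "js!l < n" using js by blast
          then show ?thesis unfolding u_def by simp
        qed
        then have "(\<Prod>l<L. u (js ! l)) = (\<Prod>l<L. 1 / real n)" by (rule prod.cong[OF refl])
        then show ?thesis by simp
      qed
      have "tensor_apply_diag k n T u i = (\<Sum>js\<in>I. T i js * (1 / real n) ^ L)"
        unfolding tensor_apply_diag_def I_def[symmetric] L_def[symmetric]
        using pr by (auto intro!: sum.cong)
      also have "\<dots> = (1 / real n) ^ L * (\<Sum>js\<in>I. T i js)"
        by (simp add: sum_distrib_left mult.commute[of "(1 / real n) ^ L"])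
      also have "(\<Sum>js\<in>I. T i js) = (\<Sum>r\<in>R. \<Sum>j<n. T i (r[m:=j]))" by (rule re)
      also have "\<dots> = real (card R)" using rowst[OF i] RI by (simp add: subset_iff)
      also have "real (card R) = real n ^ L / real n"
      proof -
        have "real (card R) * real n = real n ^ L" using cardI cardR by (metis of_nat_mult of_nat_power)
        then show ?thesis using n0 by (simp add: field_simps)
      qed
      also have "(1 / real n) ^ L * (real n ^ L / real n) = 1 / real n"
        using n0 by (simp add: power_one_over field_simps)
      finally show ?thesis using i unfolding u_def by simp
    qed
    then show ?thesis using pv unfolding is_fixed_point_def by auto
  qed
  have upos: "\<forall>i<n. u i > 0" unfolding u_def using n0 by auto
  have uniq: "p = u" if fp: "is_fixed_point k n T p" and ppos: "\<forall>i<n. p i > 0" for p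
  proof -
    have pv: "prob_vector n p" and eq: "\<And>i. i < n \<Longrightarrow> tensor_apply_diag k n T p i = p i"
      using fp unfolding is_fixed_point_def by auto
    define P where "P js = (\<Prod>l<L. p (js ! l))" for js
    define q where "q r = (\<Prod>l\<in>{..<L} - {m}. p (r ! l))" for r
    have eqP: "p i = (\<Sum>js\<in>I. T i js * P js)" if "i < n" for i
      using eq[OF that] unfolding tensor_apply_diag_def P_def I_def L_def by simp
    have Pupd: "P (r[m:=j]) = p j * q r" if "r \<in> R" for r j
    proof -
      have "P (r[m:=j]) = p (r[m:=j] ! m) * (\<Prod>l\<in>{..<L} - {m}. p (r[m:=j] ! l))"
        unfolding P_def using m by (simp add: prod.remove)
      also have "(\<Prod>l\<in>{..<L} - {m}. p (r[m:=j] ! l)) = q r"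
        unfolding q_def by (auto intro!: prod.cong)
      finally show ?thesis using m rlen[OF that] by simp
    qed
    have qpos: "q r > 0" if "r \<in> R" for r
      unfolding q_def using that ppos unfolding R_def
      by (auto intro!: prod_pos simp: subset_iff)
    have sump: "(\<Sum>i<n. p i) = 1" using pv unfolding prob_vector_def by auto
    have "1 = (\<Sum>i<n. \<Sum>js\<in>I. T i js * P js)" using sump eqP by simp
    also have "\<dots> = (\<Sum>js\<in>I. (\<Sum>i<n. T i js) * P js)"
      by (subst sum.swap) (simp add: sum_distrib_right)
    also have "\<dots> = (\<Sum>js\<in>I. P js)" using colst by simp
    also have "\<dots> = (\<Sum>r\<in>R. \<Sum>j<n. p j * q r)" using re Pupd by simp
    also have "\<dots> = (\<Sum>r\<in>R. q r)" by (simp add: sum_distrib_right[symmetric] sump)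
    finally have sumq: "(\<Sum>r\<in>R. q r) = 1" by simp
    define M where "M = Max (p ` {..<n})"
    have Mge: "p j \<le> M" if "j < n" for j unfolding M_def using that by auto
    obtain i0 where i0: "i0 < n" "p i0 = M"
      unfolding M_def using n0 Max_in[of "p ` {..<n}"] by fastforce
    have allM: "p j = M" if j: "j < n" for j
    proof (rule ccontr)
      assume "p j \<noteq> M"
      with Mge[OF j] have lt: "p j < M" by simp
      define r0 where "r0 = (replicate L (0::nat))"
      have r0R: "r0 \<in> R" unfolding r0_def R_def using m n0 by auto
      have "p i0 = (\<Sum>r\<in>R. \<Sum>j<n. T i0 (r[m:=j]) * (p j * q r))"
        using eqP[OF i0(1)] re Pupd by simp
      also have "\<dots> < (\<Sum>r\<in>R. \<Sum>j<n. T i0 (r[m:=j]) * (M * q r))"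
      proof (rule sum_strict_mono_ex1[OF finR])
        have le: "T i0 (r[m:=j']) * (p j' * q r) \<le> T i0 (r[m:=j']) * (M * q r)"
          if "r \<in> R" "j' < n" for r j'
          using Tpos[OF i0(1) updI[OF that]] qpos[OF that(1)] Mge[OF that(2)]
          by (intro mult_left_mono mult_right_mono) auto
        show "\<forall>r\<in>R. (\<Sum>j<n. T i0 (r[m:=j]) * (p j * q r)) \<le> (\<Sum>j<n. T i0 (r[m:=j]) * (M * q r))"
          using le by (auto intro!: sum_mono)
        have "(\<Sum>j<n. T i0 (r0[m:=j]) * (p j * q r0)) < (\<Sum>j<n. T i0 (r0[m:=j]) * (M * q r0))"
        proof (rule sum_strict_mono_ex1)
          show "\<forall>x\<in>{..<n}. T i0 (r0[m:=x]) * (p x * q r0) \<le> T i0 (r0[m:=x]) * (M * q r0)"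
            using le r0R by auto
          show "\<exists>a\<in>{..<n}. T i0 (r0[m:=a]) * (p a * q r0) < T i0 (r0[m:=a]) * (M * q r0)"
            using j lt Tpos[OF i0(1) updI[OF r0R j]] qpos[OF r0R] by (intro bexI[of _ j]) auto
        qed simp
        then show "\<exists>r\<in>R. (\<Sum>j<n. T i0 (r[m:=j]) * (p j * q r)) < (\<Sum>j<n. T i0 (r[m:=j]) * (M * q r))"
          using r0R by blast
      qed
      also have "\<dots> = (\<Sum>r\<in>R. M * q r * (\<Sum>j<n. T i0 (r[m:=j])))"
        by (simp add: sum_distrib_left mult.commute mult.left_commute)
      also have "\<dots> = (\<Sum>r\<in>R. M * q r)" using rowst[OF i0(1)] RI by (auto intro!: sum.cong)
      also have "\<dots> = M" using sumq by (simp add: sum_distrib_left[symmetric])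
      finally show False using i0 by simp
    qed
    have "real n * M = 1" using sump allM by simp
    then have "M = 1 / real n" using n0 by (simp add: field_simps)
    then show "p = u" using allM pv unfolding u_def prob_vector_def by (auto simp: fun_eq_iff)
  qed
  show ?thesis using ufix upos uniq by blast
qed

end
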